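(* Let $\mathcal{B}\subseteq\{1,2\}^3$ be a basic set, with associated SNRE sequences $(a_n),(b_n)$ and $S_2$-SFT $X^{\mathcal{B}}$. If $a_1=b_1$, then $h(X^{\mathcal{B}})=\frac12\ln a_1$.
   Context: $S_2$ is the free semigroup on two generators, identified with the set of finite words over $\{1,2\}$ (the binary tree with root the empty word $\epsilon$). The alphabet is $\mathcal{A}=\{1,2\}$. A basic set $\mathcal{B}\subseteq\mathcal{A}^3$ is a set of admissible 2-blocks $(i,i_1,i_2)$; $X^{\mathcal{B}}$ is the associated $S_2$-SFT. For $n\ge0$, $B_n(X^{\mathcal{B}})$ is the set of maps $u$ from words of length $\le n$ to $\mathcal{A}$ with $(u(w),u(w1),u(w2))\in\mathcal{B}$ for all words $w$ of length $\le n-1$; $a_n$ (resp. $b_n$) is the number of such $u$ with $u(\epsilon)=1$ (resp. $2$). Equivalently $a_0=b_0=1$, $a_n=F^{(a)}(a_{n-1},b_{n-1})$, $b_n=F^{(b)}(a_{n-1},b_{n-1})$ where $F^{(a)}(x,y)=\sum_{(1,i,j)\in\mathcal{B}}z_iz_j$, $F^{(b)}(x,y)=\sum_{(2,i,j)\in\mathcal{B}}z_iz_j$ with $z_1=x,z_2=y$; this is the SNRE of $X^{\mathcal{B}}$. The set $E_n$ of elements of length $\le n$ has $|E_n|=2^{n+1}-1$, and the entropy is $h(X^{\mathcal{B}})=\limsup_{n\to\infty}\frac{\ln|B_n(X^{\mathcal{B}})|}{|E_n|}=\limsup_{n\to\infty}\frac{\ln(a_n+b_n)}{2^{n+1}-1}$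 (this limsup is known to be a limit). *)

theory Defs
  imports "HOL-Analysis.Analysis" "HOL-Library.FuncSet"
begin

text \<open>Alphabet A = {1,2} (as naturals). Elements of S_2 = words over {1,2}, as lists;
  the children of w are w@[1] and w@[2]. A basic set is B \<subseteq> A^3.\<close>

definition words_le :: "nat \<Rightarrow> nat list set" where
  "words_le n = {w. set w \<subseteq> {1,2} \<and> length w \<le> n}"

definition blocks :: "(nat \<times> nat \<times> nat) set \<Rightarrow> nat \<Rightarrow> (nat list \<Rightarrow> nat) set" where
  "blocks B n = {u \<in> words_le n \<rightarrow>\<^sub>E {1,2}.
      \<forall>w \<in> words_le n. length w < n \<longrightarrow> (u w, u (w @ [1]), u (w @ [2])) \<in> B}"

definition snre_F :: "(nat \<times> nat \<times> nat) set \<Rightarrow> nat \<Rightarrow> nat \<Rightarrow> nat \<Rightarrow> nat" where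
  "snre_F B k x y = (\<Sum>(i,j) \<in> {(i,j). (k,i,j) \<in> B}.
      (if i = 1 then x else y) * (if j = 1 then x else y))"

fun snre :: "(nat \<times> nat \<times> nat) set \<Rightarrow> nat \<Rightarrow> nat \<times> nat" where
  "snre B 0 = (1, 1)"
| "snre B (Suc n) = (snre_F B 1 (fst (snre B n)) (snd (snre B n))
                   , snre_F B 2 (fst (snre B n)) (snd (snre B n)))"

definition snre_a :: "(nat \<times> nat \<times> nat) set \<Rightarrow> nat \<Rightarrow> nat" where
  "snre_a B n = fst (snre B n)"

definition snre_b :: "(nat \<times> nat \<times> nat) set \<Rightarrow> nat \<Rightarrow> nat" where
  "snre_b B n = snd (snre B n)"

text \<open>Entropy h(X^B) = limsup ln |B_n| / |E_n|, |E_n| = 2^(n+1) - 1.\<close>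
definition sft_entropy :: "(nat \<times> nat \<times> nat) set \<Rightarrow> ereal" where
  "sft_entropy B = limsup (\<lambda>n. ereal (ln (real (card (blocks B n))) / (2 ^ (n + 1) - 1)))"

end

theory Submission
  imports Defs
begin

definition R :: "(nat \<times> nat \<times> nat) set \<Rightarrow> nat \<Rightarrow> nat \<Rightarrow> (nat list \<Rightarrow> nat) set" where
  "R B k n = {u \<in> blocks B n. u [] = k}"

lemma Nil_wl[simp]: "[] \<in> words_le n"
  by (simp add: words_le_def)

lemma Cons_wl[simp]: "c # w \<in> words_le (Suc n) \<longleftrightarrow> c \<in> {1,2} \<and> w \<in> words_le n"
  by (auto simp: words_le_def)

lemma Cons_wl0[simp]: "c # w \<notin> words_le 0"
  by (auto simp: words_le_def)

lemma app_wl: "w \<in> words_le n \<Longrightarrow> length w < n \<Longrightarrow> c \<in> {1,2} \<Longrightarrow> w @ [c] \<in> words_le n"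
  by (auto simp: words_le_def)

lemma finite_wl: "finite (words_le n)"
proof -
  have "words_le n \<subseteq> {xs. set xs \<subseteq> {1,2} \<and> length xs \<le> n}" by (auto simp: words_le_def)
  moreover have "finite {xs. set xs \<subseteq> {1::nat,2} \<and> length xs \<le> n}"
    by (rule finite_lists_length_le) auto
  ultimately show ?thesis by (rule finite_subset)
qed

lemma finite_R: "finite (R B k n)"
proof -
  have "R B k n \<subseteq> words_le n \<rightarrow>\<^sub>E {1,2}" by (auto simp: R_def blocks_def)
  moreover have "finite (words_le n \<rightarrow>\<^sub>E ({1,2}::nat set))"
    by (rule finite_PiE) (auto simp: finite_wl)
  ultimately show ?thesis by (rule finite_subset)
qed

lemma card_blocks:
  "card (blocks B n) = card (R B 1 n) + card (R B 2 n)"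
proof -
  have "blocks B n = R B 1 n \<union> R B 2 n"
    apply (auto simp: R_def blocks_def PiE_def Pi_def)
    using Nil_wl by blast
  moreover have "R B 1 n \<inter> R B 2 n = {}" by (auto simp: R_def)
  ultimately show ?thesis using finite_R card_Un_disjoint by metis
qed

definition splitb :: "nat \<Rightarrow> (nat list \<Rightarrow> nat) \<Rightarrow> (nat \<times> nat) \<times> (nat list \<Rightarrow> nat) \<times> (nat list \<Rightarrow> nat)" where
  "splitb n u = ((u [1], u [2]), restrict (\<lambda>w. u (1 # w)) (words_le n), restrict (\<lambda>w. u (2 # w)) (words_le n))"

definition joinb :: "nat \<Rightarrow> nat \<Rightarrow> (nat \<times> nat) \<times> (nat list \<Rightarrow> nat) \<times> (nat list \<Rightarrow> nat) \<Rightarrow> (nat list \<Rightarrow> nat)" where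
  "joinb n k x = (\<lambda>w. if w \<in> words_le (Suc n) then
       (if w = [] then k else if hd w = 1 then fst (snd x) (tl w) else snd (snd x) (tl w)) else undefined)"

lemma R_bij:
  assumes B: "B \<subseteq> {1,2} \<times> {1,2} \<times> {1,2}" and k: "k \<in> {1,2}"
  shows "bij_betw (splitb n) (R B k (Suc n))
     (Sigma {(i,j). (k,i,j) \<in> B} (\<lambda>(i,j). R B i n \<times> R B j n))"
proof (rule bij_betw_byWitness[where f' = "joinb n k"])
  show "\<forall>u\<in>R B k (Suc n). joinb n k (splitb n u) = u"
  proof
    fix u assume u: "u \<in> R B k (Suc n)"
    show "joinb n k (splitb n u) = u"
    proof
      fix w
      show "joinb n k (splitb n u) w = u w"
      proof (cases "w \<in> words_le (Suc n)")
        case False thus ?thesis using u by (auto simp: joinb_def R_def blocks_def PiE_def extensional_def)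
      next
        case True
        show ?thesis
        proof (cases w)
          case Nil thus ?thesis using u by (auto simp: joinb_def R_def)
        next
          case (Cons c w')
          thus ?thesis using True u by (auto simp: joinb_def splitb_def)
        qed
      qed
    qed
  qed
next
  show "\<forall>x\<in>Sigma {(i,j). (k,i,j) \<in> B} (\<lambda>(i,j). R B i n \<times> R B j n). splitb n (joinb n k x) = x"
  proof
    fix x assume x: "x \<in> Sigma {(i,j). (k,i,j) \<in> B} (\<lambda>(i,j). R B i n \<times> R B j n)"
    obtain i j u1 u2 where xe: "x = ((i,j),(u1,u2))" by (metis prod.collapse)
    have u1: "u1 \<in> R B i n" and u2: "u2 \<in> R B j n" using x xe by auto
    have e1: "restrict (\<lambda>w. joinb n k x (1 # w)) (words_le n) = u1"
      using u1 by (auto simp: joinb_def xe R_def blocks_def PiE_def extensional_def restrict_def)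
    have e2: "restrict (\<lambda>w. joinb n k x (2 # w)) (words_le n) = u2"
      using u2 by (auto simp: joinb_def xe R_def blocks_def PiE_def extensional_def restrict_def)
    have "joinb n k x [1] = i" "joinb n k x [2] = j"
      using u1 u2 by (auto simp: joinb_def xe R_def)
    thus "splitb n (joinb n k x) = x" using e1 e2 by (simp add: splitb_def xe)
  qed
next
  show "splitb n ` R B k (Suc n) \<subseteq> Sigma {(i,j). (k,i,j) \<in> B} (\<lambda>(i,j). R B i n \<times> R B j n)"
  proof
    fix y assume "y \<in> splitb n ` R B k (Suc n)"
    then obtain u where u: "u \<in> R B k (Suc n)" and y: "y = splitb n u" by auto
    have ub: "u \<in> words_le (Suc n) \<rightarrow>\<^sub>E {1,2}"
      and uc: "\<And>w. w \<in> words_le (Suc n) \<Longrightarrow> length w < Suc n \<Longrightarrow> (u w, u (w @ [1]), u (w @ [2])) \<in> B"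
      and uk: "u [] = k" using u by (auto simp: R_def blocks_def)
    have top: "(k, u [1], u [2]) \<in> B" using uc[of "[]"] uk by simp
    have sub: "restrict (\<lambda>w. u (c # w)) (words_le n) \<in> R B (u [c]) n" if c: "c \<in> {1,2}" for c
    proof -
      have "restrict (\<lambda>w. u (c # w)) (words_le n) \<in> words_le n \<rightarrow>\<^sub>E {1,2}"
        using ub c by (auto simp: PiE_def Pi_def)
      moreover have "(u (c # w), u (c # w @ [1]), u (c # w @ [2])) \<in> B"
        if "w \<in> words_le n" "length w < n" for w
        using uc[of "c # w"] that c by simp
      ultimately show ?thesis using c by (auto simp: R_def blocks_def app_wl)
    qed
    show "y \<in> Sigma {(i,j). (k,i,j) \<in> B} (\<lambda>(i,j). R B i n \<times> R B j n)"
      using top sub[of 1] sub[of 2] by (simp add: y splitb_def)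
  qed
next
  show "joinb n k ` Sigma {(i,j). (k,i,j) \<in> B} (\<lambda>(i,j). R B i n \<times> R B j n) \<subseteq> R B k (Suc n)"
  proof
    fix v assume "v \<in> joinb n k ` Sigma {(i,j). (k,i,j) \<in> B} (\<lambda>(i,j). R B i n \<times> R B j n)"
    then obtain i j u1 u2 where v: "v = joinb n k ((i,j),(u1,u2))" and ijk: "(k,i,j) \<in> B"
      and u1: "u1 \<in> R B i n" and u2: "u2 \<in> R B j n" by auto
    have ij: "i \<in> {1,2}" "j \<in> {1,2}" using ijk B by auto
    have ub: "\<And>u m. u \<in> R B m n \<Longrightarrow> u \<in> words_le n \<rightarrow>\<^sub>E {1,2}" by (auto simp: R_def blocks_def)
    have uc: "\<And>u m w. u \<in> R B m n \<Longrightarrow> w \<in> words_le n \<Longrightarrow> length w < n \<Longrightarrow> (u w, u (w @ [1]), u (w @ [2])) \<in> B"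
      by (auto simp: R_def blocks_def)
    have ur: "u1 [] = i" "u2 [] = j" using u1 u2 by (auto simp: R_def)
    have "v \<in> words_le (Suc n) \<rightarrow>\<^sub>E {1,2}"
    proof -
      have "v w \<in> {1,2}" if w: "w \<in> words_le (Suc n)" for w
      proof (cases w)
        case Nil thus ?thesis using k by (simp add: v joinb_def)
      next
        case (Cons c w')
        have "w' \<in> words_le n" "c \<in> {1,2}" using w Cons by auto
        thus ?thesis using ub[OF u1] ub[OF u2] Cons by (auto simp: v joinb_def PiE_def Pi_def)
      qed
      thus ?thesis by (auto simp: v joinb_def PiE_def extensional_def)
    qed
    moreover have "(v w, v (w @ [1]), v (w @ [2])) \<in> B"
      if w: "w \<in> words_le (Suc n)" "length w < Suc n" for w
    proof (cases w)
      case Nil thus ?thesis using ijk ur by (simp add: v joinb_def)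
    next
      case (Cons c w')
      have w': "w' \<in> words_le n" "c \<in> {1,2}" "length w' < n" using w Cons by auto
      have a1: "w' @ [1] \<in> words_le n" "w' @ [2] \<in> words_le n" using w' app_wl by auto
      show ?thesis
      proof (cases "c = 1")
        case True thus ?thesis using uc[OF u1 w'(1) w'(3)] Cons w' a1 by (simp add: v joinb_def)
      next
        case False thus ?thesis using uc[OF u2 w'(1) w'(3)] Cons w' a1 by (simp add: v joinb_def)
      qed
    qed
    moreover have "v [] = k" by (simp add: v joinb_def)
    ultimately show "v \<in> R B k (Suc n)" by (auto simp: R_def blocks_def)
  qed
qed


lemma finite_S: "finite {(i,j). (k::nat,i::nat,j::nat) \<in> B}" if "B \<subseteq> {1,2} \<times> {1,2} \<times> {1,2}"
proof -
  have "{(i,j). (k,i,j) \<in> B} \<subseteq> {1,2} \<times> {1,2}" using that by auto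
  thus ?thesis by (rule finite_subset) auto
qed

lemma card_R_Suc:
  assumes B: "B \<subseteq> {1,2} \<times> {1,2} \<times> {1,2}" and k: "k \<in> {1,2}"
  shows "card (R B k (Suc n)) = (\<Sum>(i,j)\<in>{(i,j). (k,i,j) \<in> B}. card (R B i n) * card (R B j n))"
proof -
  have "card (R B k (Suc n)) = card (Sigma {(i,j). (k,i,j) \<in> B} (\<lambda>(i,j). R B i n \<times> R B j n))"
    using bij_betw_same_card[OF R_bij[OF B k]] .
  also have "\<dots> = (\<Sum>a\<in>{(i,j). (k,i,j) \<in> B}. card ((\<lambda>(i,j). R B i n \<times> R B j n) a))"
    by (rule card_SigmaI) (auto intro: finite_S[OF B] simp: finite_R)
  also have "\<dots> = (\<Sum>(i,j)\<in>{(i,j). (k,i,j) \<in> B}. card (R B i n) * card (R B j n))"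
    by (rule sum.cong) (auto simp: card_cartesian_product)
  finally show ?thesis .
qed

lemma R0: "R B k 0 = {restrict (\<lambda>_. k) {[]}}" if "k \<in> {1,2}"
proof -
  have w0: "words_le 0 = {[]}" by (auto simp: words_le_def)
  show ?thesis using that by (auto simp: R_def blocks_def w0 PiE_def extensional_def)
qed

lemma card_R:
  assumes B: "B \<subseteq> {1,2} \<times> {1,2} \<times> {1,2}"
  shows "k \<in> {1,2} \<Longrightarrow> card (R B k n) = (if k = 1 then fst (snre B n) else snd (snre B n))"
proof (induction n arbitrary: k)
  case 0 thus ?case by (simp add: R0)
next
  case (Suc n)
  have "card (R B k (Suc n)) = (\<Sum>(i,j)\<in>{(i,j). (k,i,j) \<in> B}. card (R B i n) * card (R B j n))"
    using card_R_Suc[OF B Suc.prems] .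
  also have "\<dots> = snre_F B k (fst (snre B n)) (snd (snre B n))"
    unfolding snre_F_def
  proof (rule sum.cong)
    fix x assume "x \<in> {(i,j). (k,i,j) \<in> B}"
    then obtain i j where x: "x = (i,j)" "i \<in> {1,2}" "j \<in> {1,2}" using B by auto
    show "(case x of (i, j) \<Rightarrow> card (R B i n) * card (R B j n)) =
      (case x of (i, j) \<Rightarrow> (if i = 1 then fst (snre B n) else snd (snre B n)) * (if j = 1 then fst (snre B n) else snd (snre B n)))"
      using Suc.IH[of i] Suc.IH[of j] x by simp
  qed simp
  finally show ?case using Suc.prems by auto
qed

lemma card_blocks_snre:
  assumes B: "B \<subseteq> {1,2} \<times> {1,2} \<times> {1,2}"
  shows "card (blocks B n) = snre_a B n + snre_b B n"
  using card_blocks[of B n] card_R[OF B, of 1 n] card_R[OF B, of 2 n]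
  by (simp add: snre_a_def snre_b_def)

lemma snre_F_diag: "snre_F B k x x = card {(i,j). (k,i,j) \<in> B} * (x * x)"
  unfolding snre_F_def by (simp add: case_prod_beta)

lemma snre_const:
  assumes "snre_a B 1 = snre_b B 1"
  shows "snre B n = (snre_a B 1 ^ (2^n - 1), snre_a B 1 ^ (2^n - 1))"
proof -
  obtain c where cdef: "c = snre_a B 1" by simp
  have a1: "snre_a B 1 = snre_F B 1 1 1" by (simp add: snre_a_def)
  have b1: "snre_b B 1 = snre_F B 2 1 1" by (simp add: snre_b_def)
  have c1: "card {(i,j). (1,i,j) \<in> B} = c" using a1 cdef by (simp add: snre_F_diag)
  have c2: "card {(i,j). (2,i,j) \<in> B} = c" using b1 assms a1 cdef by (simp add: snre_F_diag)
  have "snre B n = (c ^ (2^n - 1), c ^ (2^n - 1))"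
  proof (induction n)
    case 0 thus ?case by simp
  next
    case (Suc n)
    have e: "c * (c ^ (2^n - 1) * c ^ (2^n - 1)) = c ^ (2 ^ Suc n - 1)"
    proof -
      have "(1::nat) \<le> 2^n" by simp
      hence "1 + (2^n - 1) + (2^n - 1) = (2 ^ Suc n - 1::nat)" by simp
      hence "c ^ (2 ^ Suc n - 1) = c ^ (1 + (2^n - 1) + (2^n - 1))" by simp
      also have "\<dots> = c * (c ^ (2^n - 1) * c ^ (2^n - 1))" by (simp only: power_add power_one_right mult.assoc)
      finally show ?thesis by simp
    qed
    have "snre B (Suc n) = (snre_F B 1 (c ^ (2^n - 1)) (c ^ (2^n - 1)), snre_F B 2 (c ^ (2^n - 1)) (c ^ (2^n - 1)))"
      using Suc.IH by simp
    also have "\<dots> = (c * (c ^ (2^n - 1) * c ^ (2^n - 1)), c * (c ^ (2^n - 1) * c ^ (2^n - 1)))"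
      by (simp only: snre_F_diag c1 c2)
    also have "\<dots> = (c ^ (2 ^ Suc n - 1), c ^ (2 ^ Suc n - 1))" by (simp only: e)
    finally show ?case .
  qed
  thus ?thesis using cdef by simp
qed

lemma seq_lim:
  fixes L :: real
  shows "(\<lambda>n::nat. (ln 2 + (2^n - 1) * L) / (2^(n+1) - 1)) \<longlonglongrightarrow> L / 2"
proof -
  have pos: "(2::real)^(n+1) - 1 > 0" for n :: nat
  proof -
    have "(1::real) \<le> 2^n" by simp
    hence "(2::real)^(n+1) \<ge> 2" by simp
    thus ?thesis by linarith
  qed
  have eq: "(ln 2 + (2^n - 1) * L) / (2^(n+1) - 1) = L/2 + (ln 2 - L/2) * inverse (2^(n+1) - 1)"
    for n :: nat
    using pos[of n] by (simp add: field_simps)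
  have ge: "real n \<le> 2^(n+1) - 1" for n :: nat
  proof -
    have "real n < 2 ^ n" by (rule of_nat_less_two_power)
    moreover have "(1::real) \<le> 2^n" by simp
    moreover have "(2::real)^(n+1) = 2*2^n" by simp
    ultimately show ?thesis by linarith
  qed
  have "filterlim (\<lambda>n::nat. (2::real)^(n+1) - 1) at_top sequentially"
    by (rule filterlim_at_top_mono[OF filterlim_real_sequentially]) (use ge in auto)
  hence "(\<lambda>n::nat. inverse ((2::real)^(n+1) - 1)) \<longlonglongrightarrow> 0"
    by (rule tendsto_inverse_0_at_top)
  hence "(\<lambda>n::nat. L/2 + (ln 2 - L/2) * inverse ((2::real)^(n+1) - 1)) \<longlonglongrightarrow> L/2 + (ln 2 - L/2) * 0"
    by (intro tendsto_intros)
  thus ?thesis unfolding eq by simp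
qed

theorem proposition2:
  fixes B :: "(nat \<times> nat \<times> nat) set"
  assumes "B \<subseteq> {1,2} \<times> {1,2} \<times> {1,2}"
    and "snre_a B 1 = snre_b B 1"
  shows "sft_entropy B = ereal (ln (real (snre_a B 1)) / 2)"
proof -
  define c where "c = snre_a B 1"
  have cb: "card (blocks B n) = 2 * c ^ (2^n - 1)" for n
    using card_blocks_snre[OF assms(1), of n] snre_const[OF assms(2), of n]
    by (simp add: snre_a_def snre_b_def c_def)
  show ?thesis
  proof (cases "c = 0")
    case True
    have ev: "eventually (\<lambda>n. ereal (ln (real (card (blocks B n))) / (2 ^ (n + 1) - 1)) = 0) sequentially"
      using eventually_ge_at_top[of "1::nat"]
    proof (rule eventually_mono)
      fix n :: nat assume "1 \<le> n"
      hence "(2::nat)^1 \<le> 2^n" by (rule power_increasing) simp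
      hence "(2::nat)^n - 1 \<noteq> 0" by simp
      hence "card (blocks B n) = 0" using True cb[of n] by (simp add: power_0_left)
      thus "ereal (ln (real (card (blocks B n))) / (2 ^ (n + 1) - 1)) = 0"
        by simp
    qed
    have "(\<lambda>n. ereal (ln (real (card (blocks B n))) / (2 ^ (n + 1) - 1))) \<longlonglongrightarrow> 0"
      by (rule tendsto_eventually[OF ev])
    hence "sft_entropy B = 0" unfolding sft_entropy_def by (rule lim_imp_Limsup[rotated]) simp
    thus ?thesis using True by (simp add: c_def)
  next
    case False
    hence cpos: "real c > 0" by simp
    have eq: "ln (real (card (blocks B n))) / (2 ^ (n + 1) - 1) = (ln 2 + (2^n - 1) * ln (real c)) / (2^(n+1) - 1)" for n
    proof -
      have "ln (real (card (blocks B n))) = ln (2 * real c ^ (2^n - 1))" by (simp add: cb)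
      also have "\<dots> = ln 2 + real (2^n - 1) * ln (real c)" using cpos by (simp add: ln_mult ln_realpow)
      also have "real (2^n - 1 :: nat) = 2^n - 1" by (simp add: of_nat_diff)
      finally show ?thesis by simp
    qed
    have "(\<lambda>n. ereal (ln (real (card (blocks B n))) / (2 ^ (n + 1) - 1))) \<longlonglongrightarrow> ereal (ln (real c) / 2)"
      unfolding eq by (rule tendsto_ereal[OF seq_lim])
    hence "sft_entropy B = ereal (ln (real c) / 2)" unfolding sft_entropy_def by (rule lim_imp_Limsup[rotated]) simp
    thus ?thesis by (simp add: c_def)
  qed
qed

end
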